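(* For any $1\le y<x$ and any $v\ge \log n_{<y}$, one has (for every outcome of the random model) \[ \Delta(n_{<x})\ge \frac{\tau(n_{<y})}{2v+1}\cdot\Delta^{(v)}(n_{[y,x)}). \]
   Context: $\Delta(n)\coloneqq \max_{u\in\mathbb{R}}\#\{d\mid n: e^u<d\le e^{u+1}\}$, and for $v>0$, $\Delta^{(v)}(n)\coloneqq\max_{u\in\mathbb{R}}\#\{d\mid n: e^u<d\le e^{u+v}\}$; $\tau(n)$ is the number of divisors of $n$. Random model: for each prime $p$, $n_p$ equals $1$ with probability $\frac{p}{p+1}$ and $p$ with probability $\frac1{p+1}$, independently over $p$; $n_{<z}\coloneqq\prod_{p<z}n_p$ and $n_{[y,x)}\coloneqq\prod_{y\le p<x}n_p$, so $n_{<x}=n_{<y}n_{[y,x)}$. *)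

theory Defs
  imports "HOL-Computational_Algebra.Primes" Complex_Main
begin

definition divisor_count :: "nat \<Rightarrow> nat" where
  "divisor_count n = card {d. d dvd n}"

definition Delta_v :: "real \<Rightarrow> nat \<Rightarrow> nat" where
  "Delta_v v n = Sup ((\<lambda>u::real. card {d. d dvd n \<and> exp u < real d \<and> real d \<le> exp (u + v)}) ` UNIV)"

definition Delta :: "nat \<Rightarrow> nat" where
  "Delta n = Sup ((\<lambda>u::real. card {d. d dvd n \<and> exp u < real d \<and> real d \<le> exp (u + 1)}) ` UNIV)"

definition outcome :: "(nat \<Rightarrow> nat) \<Rightarrow> bool" where
  "outcome np \<longleftrightarrow> (\<forall>p. prime p \<longrightarrow> np p = 1 \<or> np p = p)"

definition n_lt :: "(nat \<Rightarrow> nat) \<Rightarrow> real \<Rightarrow> nat" where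
  "n_lt np z = (\<Prod>p\<in>{p. prime p \<and> real p < z}. np p)"

definition n_range :: "(nat \<Rightarrow> nat) \<Rightarrow> real \<Rightarrow> real \<Rightarrow> nat" where
  "n_range np y x = (\<Prod>p\<in>{p. prime p \<and> y \<le> real p \<and> real p < x}. np p)"

end

theory Submission
  imports Defs
begin

lemma fin_primes_below: "finite {p::nat. prime p \<and> real p < z}"
proof -
  have "{p::nat. prime p \<and> real p < z} \<subseteq> {..nat \<lceil>z\<rceil>}"
  proof
    fix p assume "p \<in> {p::nat. prime p \<and> real p < z}"
    then have "real p < z" by auto
    moreover have "z \<le> real (nat \<lceil>z\<rceil>)" by (rule real_nat_ceiling_ge)
    ultimately have "real p \<le> real (nat \<lceil>z\<rceil>)" by linarith
    then show "p \<in> {..nat \<lceil>z\<rceil>}" by simp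
  qed
  then show ?thesis by (rule finite_subset) simp
qed

lemma np_pos: "outcome np \<Longrightarrow> prime p \<Longrightarrow> np p > 0"
proof -
  assume a: "outcome np" "prime p"
  then have "np p = 1 \<or> np p = p" unfolding outcome_def by blast
  moreover have "p > 0" using a(2) prime_gt_0_nat by blast
  ultimately show ?thesis by auto
qed

lemma n_lt_pos: "outcome np \<Longrightarrow> n_lt np z > 0"
  unfolding n_lt_def using np_pos[of np] by (intro prod_pos) auto

lemma n_range_pos: "outcome np \<Longrightarrow> n_range np y z > 0"
  unfolding n_range_def using np_pos[of np] by (intro prod_pos) auto

lemma split_n: assumes "y \<le> x" shows "n_lt np x = n_lt np y * n_range np y x"
proof -
  have e: "{p. prime p \<and> real p < x} = {p. prime p \<and> real p < y} \<union> {p. prime p \<and> y \<le> real p \<and> real p < x}"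
    using assms by auto
  have f2: "finite {p. prime p \<and> y \<le> real p \<and> real p < x}"
    by (rule finite_subset[OF _ fin_primes_below[of x]]) auto
  show ?thesis unfolding n_lt_def n_range_def e
    by (rule prod.union_disjoint) (auto simp: fin_primes_below f2)
qed

lemma coprime_parts: assumes "outcome np"
  shows "coprime (n_lt np y) (n_range np y x)"
  unfolding n_lt_def n_range_def
proof (intro prod_coprime_left prod_coprime_right)
  fix p q assume p: "p \<in> {p. prime p \<and> real p < y}" and q: "q \<in> {p. prime p \<and> y \<le> real p \<and> real p < x}"
  then have "p \<noteq> q" by auto
  moreover have "np p = 1 \<or> np p = p" "np q = 1 \<or> np q = q" using assms p q unfolding outcome_def by auto
  ultimately show "coprime (np p) (np q)" using p q primes_coprime[of p q] by auto
qed

lemma card_le_Delta_gen: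
  assumes "n > 0"
  shows "card {d. d dvd n \<and> exp u < real d \<and> real d \<le> exp (u + w)} \<le>
     Sup ((\<lambda>u::real. card {d. d dvd n \<and> exp u < real d \<and> real d \<le> exp (u + w)}) ` UNIV)"
proof (rule cSup_upper)
  show "bdd_above ((\<lambda>u::real. card {d. d dvd n \<and> exp u < real d \<and> real d \<le> exp (u + w)}) ` UNIV)"
    unfolding bdd_above_def
    by (rule exI[of _ "card {d. d dvd n}"]) (auto intro!: card_mono simp: assms)
qed auto

lemma Delta_attained:
  assumes "n > 0"
  shows "\<exists>u. Sup ((\<lambda>u::real. card {d. d dvd n \<and> exp u < real d \<and> real d \<le> exp (u + w)}) ` UNIV)
       = card {d. d dvd n \<and> exp u < real d \<and> real d \<le> exp (u + w)}"
proof -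
  let ?X = "(\<lambda>u::real. card {d. d dvd n \<and> exp u < real d \<and> real d \<le> exp (u + w)}) ` UNIV"
  have "?X \<subseteq> {..card {d. d dvd n}}"
    by (auto intro!: card_mono simp: assms)
  then have fin: "finite ?X" using finite_subset by blast
  have "Sup ?X = Max ?X" by (rule cSup_eq_Max[OF fin]) auto
  moreover have "Max ?X \<in> ?X" by (rule Max_in[OF fin]) auto
  ultimately show ?thesis by auto
qed

theorem lemma3p1:
  fixes np :: "nat \<Rightarrow> nat" and x y v :: real
  assumes "outcome np" and "1 \<le> y" and "y < x" and "v \<ge> ln (real (n_lt np y))"
  shows "real (Delta (n_lt np x)) \<ge>
           real (divisor_count (n_lt np y)) / (2 * v + 1) * real (Delta_v v (n_range np y x))"
proof -
  define m where "m = n_lt np y"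
  define k where "k = n_range np y x"
  define n where "n = n_lt np x"
  have mpos: "m > 0" and kpos: "k > 0" unfolding m_def k_def
    using n_lt_pos n_range_pos assms(1) by auto
  have npos: "n > 0" unfolding n_def using n_lt_pos assms(1) by auto
  have nmk: "n = m * k" unfolding n_def m_def k_def using split_n assms(3) by auto
  have cop: "coprime m k" unfolding m_def k_def using coprime_parts assms(1) by auto
  have lnm: "ln (real m) \<le> v" using assms(4) m_def by simp
  have "real m \<ge> 1" using mpos by simp
  then have "ln (real m) \<ge> 0" by simp
  then have v0: "v \<ge> 0" using lnm by linarith
  obtain u where u: "Delta_v v k = card {d. d dvd k \<and> exp u < real d \<and> real d \<le> exp (u + v)}"
    using Delta_attained[OF kpos, of v] unfolding Delta_v_def by metis
  define Dk where "Dk = {d. d dvd k \<and> exp u < real d \<and> real d \<le> exp (u + v)}"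
  define Dm where "Dm = {a. a dvd m}"
  define S where "S = {e. e dvd n \<and> exp u < real e \<and> real e \<le> exp (u + 2*v)}"
  define T where "T = (\<lambda>j::nat. {e. e dvd n \<and> exp (u + real j) < real e \<and> real e \<le> exp ((u + real j) + 1)})"
  define N where "N = nat \<lceil>2*v\<rceil>"
  have finDk: "finite Dk" unfolding Dk_def using kpos by (auto intro: finite_subset[OF _ finite_divisors_nat[of k]])
  have finDm: "finite Dm" unfolding Dm_def using mpos finite_divisors_nat by auto
  have finT: "\<And>j. finite (T j)" unfolding T_def using npos by (auto intro: finite_subset[OF _ finite_divisors_nat[of n]])
  have inj: "inj_on (\<lambda>(a,d). a*d) (Dm \<times> Dk)"
  proof (rule inj_onI)
    fix p1 p2 assume hp: "p1 \<in> Dm \<times> Dk" "p2 \<in> Dm \<times> Dk" "(\<lambda>(a,d). a*d) p1 = (\<lambda>(a,d). a*d) p2"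
    obtain a1 d1 a2 d2 where pp: "p1 = (a1,d1)" "p2 = (a2,d2)" by (cases p1, cases p2) auto
    have h: "a1 dvd m" "d1 dvd k" "a2 dvd m" "d2 dvd k" "a1 * d1 = a2 * d2"
      using hp pp unfolding Dm_def Dk_def by auto
    have c1: "coprime a1 d2" using h(1,4) cop coprime_imp_coprime dvd_trans by (meson coprime_divisors)
    have c2: "coprime a2 d1" using h(3,2) cop by (meson coprime_divisors)
    have "a1 dvd a2 * d2" using h(5) by (metis dvd_triv_left)
    then have d12: "a1 dvd a2" using c1 coprime_dvd_mult_left_iff by blast
    have "a2 dvd a1 * d1" using h(5) by (metis dvd_triv_left)
    then have d21: "a2 dvd a1" using c2 coprime_dvd_mult_left_iff by blast
    have e: "a1 = a2" using d12 d21 by (simp add: dvd_antisym)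
    have "a1 > 0" using h(1) mpos by (auto intro: dvd_pos_nat)
    then have "d1 = d2" using h(5) e by auto
    then show "p1 = p2" using e pp by simp
  qed
  have img: "(\<lambda>(a,d). a*d) ` (Dm \<times> Dk) \<subseteq> S"
  proof clarify
    fix a d assume a: "a \<in> Dm" and d: "d \<in> Dk"
    have adv: "a dvd m" "d dvd k" using a d unfolding Dm_def Dk_def by auto
    have apos: "a > 0" using adv mpos by (auto intro: dvd_pos_nat)
    have am: "real a \<le> real m" using adv mpos by (simp add: dvd_imp_le)
    have dl: "exp u < real d" "real d \<le> exp (u+v)" using d unfolding Dk_def by auto
    have "exp u < real d * 1" using dl by simp
    also have "\<dots> \<le> real d * real a" using apos by (intro mult_left_mono) auto
    finally have lo: "exp u < real (a*d)" by (simp add: mult.commute)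
    have "real m \<le> exp v" using lnm mpos by (metis exp_ln of_nat_0_less_iff exp_le_cancel_iff)
    then have "real a * real d \<le> exp v * exp (u+v)"
      using am dl by (intro mult_mono) auto
    also have "\<dots> = exp (u + 2*v)" by (simp add: exp_add[symmetric])
    finally have hi: "real (a*d) \<le> exp (u + 2*v)" by simp
    have "a * d dvd n" using adv nmk by (simp add: mult_dvd_mono)
    then show "a * d \<in> S" unfolding S_def using lo hi by auto
  qed
  have finS: "finite S" unfolding S_def using npos by (auto intro: finite_subset[OF _ finite_divisors_nat[of n]])
  have c1: "card Dm * card Dk \<le> card S"
  proof -
    have "card Dm * card Dk = card (Dm \<times> Dk)" by (simp add: card_cartesian_product)
    also have "\<dots> = card ((\<lambda>(a,d). a*d) ` (Dm \<times> Dk))" using card_image[OF inj] by simp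
    also have "\<dots> \<le> card S" using card_mono[OF finS img] .
    finally show ?thesis .
  qed
  have cover: "S \<subseteq> (\<Union>j<N. T j)"
  proof
    fix e assume e: "e \<in> S"
    then have "exp u < real e" unfolding S_def by simp
    then have epos: "real e > 0" using exp_gt_zero[of u] by linarith
    have eL: "real e = exp (ln (real e))" using epos by simp
    have l1: "u < ln (real e)" using e eL unfolding S_def by (metis (mono_tags, lifting) exp_less_cancel_iff mem_Collect_eq)
    have l2: "ln (real e) \<le> u + 2*v" using e eL unfolding S_def by (metis (mono_tags, lifting) exp_le_cancel_iff mem_Collect_eq)
    define i where "i = \<lceil>ln (real e) - u\<rceil> - 1"
    have i0: "i \<ge> 0" unfolding i_def using l1 by simp
    have i1: "real_of_int i < ln (real e) - u" unfolding i_def by linarith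
    have i2: "ln (real e) - u \<le> real_of_int i + 1" unfolding i_def by linarith
    have iN: "i < \<lceil>2*v\<rceil>" proof -
      have "\<lceil>ln (real e) - u\<rceil> \<le> \<lceil>2*v\<rceil>" using l2 by (intro ceiling_mono) linarith
      then show ?thesis unfolding i_def by linarith
    qed
    define j where "j = nat i"
    have rj: "real j = real_of_int i" unfolding j_def using i0 by simp
    have jN: "j < N" unfolding j_def N_def using i0 iN by (metis nat_less_eq_zless)
    have "exp (u + real j) < exp (ln (real e))" using i1 rj by simp
    then have "exp (u + real j) < real e" using eL by simp
    moreover have "exp (ln (real e)) \<le> exp (u + real j + 1)" using i2 rj by simp
    then have "real e \<le> exp (u + real j + 1)" using eL by simp
    ultimately have "e \<in> T j" using e unfolding T_def S_def by auto
    then show "e \<in> (\<Union>j<N. T j)" using jN by auto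
  qed
  have c2: "card S \<le> N * Delta n"
  proof -
    have "card S \<le> card (\<Union>j<N. T j)" by (rule card_mono) (auto simp: finT cover)
    also have "\<dots> \<le> (\<Sum>j<N. card (T j))" by (rule card_UN_le) simp
    also have "\<dots> \<le> (\<Sum>j<N. Delta n)"
      by (rule sum_mono) (unfold T_def Delta_def, rule card_le_Delta_gen[OF npos])
    also have "\<dots> = N * Delta n" by simp
    finally show ?thesis .
  qed
  have tau: "divisor_count m = card Dm" unfolding divisor_count_def Dm_def by simp
  have key: "real (card Dm) * real (card Dk) \<le> real N * real (Delta n)"
    using c1 c2 by (metis le_trans of_nat_le_iff of_nat_mult)
  have NN: "real N \<le> 2*v + 1" unfolding N_def using v0 by linarith
  have "real (card Dm) * real (card Dk) \<le> (2*v+1) * real (Delta n)"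
  proof -
    have "real N * real (Delta n) \<le> (2*v+1) * real (Delta n)" by (rule mult_right_mono[OF NN]) simp
    then show ?thesis using key by linarith
  qed
  then have "real (card Dm) / (2*v+1) * real (card Dk) \<le> real (Delta n)"
    using v0 by (simp add: field_simps)
  then show ?thesis using tau u unfolding m_def k_def n_def Dk_def by simp
qed

end
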